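(* Let $(R,\mathfrak{m})$ be a commutative Artinian local ring with identity, $\mathfrak{m}\neq0$ and $\mathfrak{m}^2=0$, and let $n\ge7$ be an integer. If $|R|>4$ (including $R$ infinite), then $L(x^n)=\{3,4,5,\dots,n-2\}\cup\{n\}$ if $n$ is odd, and $L(x^n)=\{2,3,4,\dots,n-2\}\cup\{n\}$ if $n$ is even. If $|R|=4$, then $L(x^n)=\{3,4,5,\dots,n-4\}\cup\{n-2,n\}$ if $n$ is odd, and $L(x^n)=\{2,3,4,\dots,n-4\}\cup\{n-2,n\}$ if $n$ is even.
   Context: A nonunit polynomial in $R[x]$ is irreducible if in any factorization into two polynomials one factor is a unit of $R[x]$ (a polynomial $a_0+\dots+a_dx^d$ is a unit iff $a_0$ is a unit of $R$ and $a_i\in\mathfrak{m}$ for $i>0$). A positive integer $k$ is a length of $f\in R[x]$ if $f$ is a product of $k$ irreducible polynomials of $R[x]$; $L(f)$ denotes the set of lengths of $f$. *)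

theory Defs
  imports "HOL-Computational_Algebra.Polynomial" "HOL-Computational_Algebra.Factorial_Ring"
begin

definition is_ideal :: "'a::comm_ring_1 set \<Rightarrow> bool" where
  "is_ideal I \<longleftrightarrow> 0 \<in> I \<and> (\<forall>a\<in>I. \<forall>b\<in>I. a + b \<in> I) \<and> (\<forall>r. \<forall>a\<in>I. r * a \<in> I)"

definition artinian_ring :: "'a::comm_ring_1 itself \<Rightarrow> bool" where
  "artinian_ring _ \<longleftrightarrow>
     \<not> (\<exists>I :: nat \<Rightarrow> 'a set. (\<forall>k. is_ideal (I k)) \<and> (\<forall>k. I (Suc k) \<subset> I k))"

definition maximal_ideal :: "'a::comm_ring_1 set \<Rightarrow> bool" where
  "maximal_ideal M \<longleftrightarrow> is_ideal M \<and> M \<noteq> UNIV \<and>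
     (\<forall>J. is_ideal J \<and> M \<subseteq> J \<longrightarrow> J = M \<or> J = UNIV)"

definition local_ring_with_max :: "'a::comm_ring_1 set \<Rightarrow> bool" where
  "local_ring_with_max M \<longleftrightarrow> maximal_ideal M \<and> (\<forall>J. maximal_ideal J \<longrightarrow> J = M)"

definition lengths :: "'a::comm_ring_1 poly \<Rightarrow> nat set" where
  "lengths f = {k. k > 0 \<and> (\<exists>fs. length fs = k \<and> (\<forall>g\<in>set fs. irreducible g) \<and> prod_list fs = f)}"

end

theory Submission
  imports Defs
begin


locale sqz =
  fixes M :: "'a::comm_ring_1 set"
  assumes idl: "is_ideal M" and one_nin: "1 \<notin> M"
    and unitI: "x \<notin> M \<Longrightarrow> x dvd 1"
    and sq: "a \<in> M \<Longrightarrow> b \<in> M \<Longrightarrow> a * b = 0"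
begin

lemma zero_in[simp]: "0 \<in> M" using idl by (simp add: is_ideal_def)
lemma add_in: "a \<in> M \<Longrightarrow> b \<in> M \<Longrightarrow> a + b \<in> M" using idl by (simp add: is_ideal_def)
lemma mult_inR: "a \<in> M \<Longrightarrow> r * a \<in> M" using idl by (simp add: is_ideal_def)
lemma mult_inL: "a \<in> M \<Longrightarrow> a * r \<in> M" using mult_inR[of a r] by (simp add: mult.commute)
lemma neg_in: "a \<in> M \<Longrightarrow> - a \<in> M" using mult_inR[of a "-1"] by simp
lemma diff_in: "a \<in> M \<Longrightarrow> b \<in> M \<Longrightarrow> a - b \<in> M"
  using add_in[of a "-b"] neg_in[of b] by simp
lemma sum_in: "(\<And>i. i \<in> A \<Longrightarrow> f i \<in> M) \<Longrightarrow> sum f A \<in> M"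
  by (induct A rule: infinite_finite_induct) (auto intro: add_in)

lemma unit_nin: "x dvd 1 \<Longrightarrow> x \<notin> M"
proof
  assume "x dvd 1" "x \<in> M"
  then obtain y where "1 = x * y" by (auto elim: dvdE)
  with mult_inL[OF \<open>x \<in> M\<close>, of y] one_nin show False by simp
qed

lemma mult_nin: assumes "x \<notin> M" "y \<notin> M" shows "x * y \<notin> M"
proof -
  from unitI[OF assms(1)] obtain a where a: "1 = x * a" by (rule dvdE)
  from unitI[OF assms(2)] obtain b where b: "1 = y * b" by (rule dvdE)
  have "(x*y) * (a*b) = (x*a)*(y*b)" by (simp add: algebra_simps)
  then have "x * y dvd 1" using a b by (metis dvdI mult_1_left)
  then show ?thesis by (rule unit_nin)
qed

lemma add_nin: "x \<notin> M \<Longrightarrow> y \<in> M \<Longrightarrow> x + y \<notin> M"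
  using diff_in[of "x+y" y] by auto

lemma mult_ne0: "u \<notin> M \<Longrightarrow> w \<noteq> 0 \<Longrightarrow> u * w \<noteq> 0"
proof
  assume "u \<notin> M" "w \<noteq> 0" "u * w = 0"
  from unitI[OF \<open>u \<notin> M\<close>] obtain v where "1 = u * v" by (rule dvdE)
  then have "w = v * (u * w)" by (metis mult.assoc mult.commute mult_1_left)
  with \<open>u*w=0\<close> \<open>w\<noteq>0\<close> show False by simp
qed

definition sing :: "'a poly \<Rightarrow> nat \<Rightarrow> bool" where
  "sing f d \<longleftrightarrow> coeff f d \<notin> M \<and> (\<forall>j. j \<noteq> d \<longrightarrow> coeff f j \<in> M)"

lemma core:
  assumes "coeff g a \<notin> M" "coeff h b \<notin> M"
    "\<And>i. i \<le> a+b \<Longrightarrow> i \<noteq> a \<Longrightarrow> coeff g i * coeff h (a+b-i) \<in> M"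
  shows "coeff (g*h) (a+b) \<notin> M"
proof -
  have "coeff (g*h) (a+b) = coeff g a * coeff h (a+b-a) + (\<Sum>i\<in>{..a+b}-{a}. coeff g i * coeff h (a+b-i))"
    unfolding coeff_mult by (subst sum.remove[of _ a]) auto
  moreover have "(\<Sum>i\<in>{..a+b}-{a}. coeff g i * coeff h (a+b-i)) \<in> M"
    by (rule sum_in) (use assms(3) in auto)
  ultimately show ?thesis using mult_nin[OF assms(1,2)] add_nin by simp
qed

lemma allM_mult: "(\<And>j. coeff p j \<in> M) \<Longrightarrow> coeff (p*q) n \<in> M"
  unfolding coeff_mult by (rule sum_in) (simp add: mult_inL)

lemma allM_mult2: "(\<And>j. coeff p j \<in> M) \<Longrightarrow> coeff (q*p) n \<in> M"
  using allM_mult[of p q n] by (simp add: mult.commute)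

lemma allM_sq: "(\<And>j. coeff p j \<in> M) \<Longrightarrow> (\<And>j. coeff q j \<in> M) \<Longrightarrow> p*q = 0"
  by (rule poly_eqI) (simp add: coeff_mult sq)

lemma S1: assumes "sing g a" "sing h b" shows "sing (g*h) (a+b)"
proof -
  have "coeff (g*h) (a+b) \<notin> M"
    by (rule core) (use assms in \<open>auto simp: sing_def intro: mult_inL\<close>)
  moreover have "coeff (g*h) j \<in> M" if "j \<noteq> a+b" for j
    unfolding coeff_mult
  proof (rule sum_in)
    fix i assume "i \<in> {..j}"
    show "coeff g i * coeff h (j - i) \<in> M"
    proof (cases "i = a")
      case True then have "j - i \<noteq> b" using that \<open>i \<in> {..j}\<close> by auto
      then show ?thesis using assms by (auto simp: sing_def intro: mult_inR)
    next
      case False then show ?thesis using assms by (auto simp: sing_def intro: mult_inL)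
    qed
  qed
  ultimately show ?thesis by (simp add: sing_def)
qed

lemma range_ex:
  assumes "\<exists>i. coeff g i \<notin> M"
  shows "\<exists>a1 a2. coeff g a1 \<notin> M \<and> coeff g a2 \<notin> M \<and> (\<forall>j. coeff g j \<notin> M \<longrightarrow> a1 \<le> j \<and> j \<le> a2)"
proof -
  let ?S = "{i. coeff g i \<notin> M}"
  have fin: "finite ?S"
  proof (rule finite_subset[of _ "{..degree g}"])
    show "?S \<subseteq> {..degree g}"
      by (force intro: le_degree)
  qed simp
  have ne: "?S \<noteq> {}" using assms by auto
  show ?thesis
    by (rule exI[of _ "Min ?S"], rule exI[of _ "Max ?S"])
       (use Min_in[OF fin ne] Max_in[OF fin ne] fin in auto)
qed

lemma S2: assumes "sing (g*h) d" shows "\<exists>a b. sing g a \<and> sing h b \<and> a + b = d"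
proof -
  have "\<exists>i. coeff g i \<notin> M"
    using assms allM_mult[of g h d] by (auto simp: sing_def)
  then obtain a1 a2 where A: "coeff g a1 \<notin> M" "coeff g a2 \<notin> M"
    "\<And>j. coeff g j \<notin> M \<Longrightarrow> a1 \<le> j \<and> j \<le> a2" using range_ex by blast
  have "\<exists>i. coeff h i \<notin> M"
    using assms allM_mult2[of h g d] by (auto simp: sing_def)
  then obtain b1 b2 where B: "coeff h b1 \<notin> M" "coeff h b2 \<notin> M"
    "\<And>j. coeff h j \<notin> M \<Longrightarrow> b1 \<le> j \<and> j \<le> b2" using range_ex by blast
  have "coeff (g*h) (a1+b1) \<notin> M"
  proof (rule core[OF A(1) B(1)])
    fix i assume "i \<le> a1+b1" "i \<noteq> a1"
    show "coeff g i * coeff h (a1 + b1 - i) \<in> M"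
    proof (cases "i < a1")
      case True then have "coeff g i \<in> M" using A(3) by force
      then show ?thesis by (rule mult_inL)
    next
      case False then have "a1+b1-i < b1" using \<open>i \<noteq> a1\<close> \<open>i \<le> a1+b1\<close> by auto
      then have "coeff h (a1+b1-i) \<in> M" using B(3) by force
      then show ?thesis by (rule mult_inR)
    qed
  qed
  then have e1: "a1 + b1 = d" using assms by (auto simp: sing_def)
  have "coeff (g*h) (a2+b2) \<notin> M"
  proof (rule core[OF A(2) B(2)])
    fix i assume "i \<le> a2+b2" "i \<noteq> a2"
    show "coeff g i * coeff h (a2 + b2 - i) \<in> M"
    proof (cases "i > a2")
      case True then have "coeff g i \<in> M" using A(3) by force
      then show ?thesis by (rule mult_inL)
    next
      case False then have "a2+b2-i > b2" using \<open>i \<noteq> a2\<close> \<open>i \<le> a2+b2\<close> by auto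
      then have "coeff h (a2+b2-i) \<in> M" using B(3) by force
      then show ?thesis by (rule mult_inR)
    qed
  qed
  then have e2: "a2 + b2 = d" using assms by (auto simp: sing_def)
  have "a1 \<le> a2" "b1 \<le> b2" using A B by auto
  with e1 e2 have "a1 = a2" "b1 = b2" by auto
  then have "sing g a1" "sing h b1" using A B by (auto simp: sing_def) (metis le_antisym)+
  with e1 show ?thesis by blast
qed

lemma inv_aux: fixes C C' p :: "'b::comm_ring_1"
  assumes "C * C' = 1" "p * p = 0" shows "(C + p) * (C' - C'*C'*p) = 1"
proof -
  have "(C + p) * (C' - C'*C'*p) = C*C' - (C*C')*C'*p + p*C' - C'*C'*(p*p)"
    by (simp add: algebra_simps)
  then show ?thesis using assms by (simp add: algebra_simps)
qed

lemma sing_unit: assumes "sing f 0" shows "f dvd 1"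
proof -
  define c where "c = coeff f 0"
  have c: "c \<notin> M" using assms by (simp add: sing_def c_def)
  from unitI[OF c] obtain c' where c': "1 = c * c'" by (rule dvdE)
  define p where "p = f - [:c:]"
  have pM: "coeff p j \<in> M" for j
    using assms by (cases j) (auto simp: p_def sing_def c_def intro: diff_in)
  have pp: "p * p = 0" using allM_sq[OF pM pM] .
  have CC: "[:c:] * [:c':] = 1" using c' by (simp add: one_pCons ac_simps)
  have f: "f = [:c:] + p" by (simp add: p_def)
  show ?thesis using inv_aux[OF CC pp] f by (metis dvdI)
qed

lemma sing_one: "sing 1 0" by (simp add: sing_def one_nin)

lemma sing_uniq: "sing f a \<Longrightarrow> sing f b \<Longrightarrow> a = b"
  by (auto simp: sing_def)

lemma unit_sing: assumes "f dvd 1" shows "sing f 0"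
proof -
  from assms obtain g where "1 = f * g" by (rule dvdE)
  with sing_one have "sing (f*g) 0" by simp
  from S2[OF this] show ?thesis by auto
qed

lemma unit_iff: "sing f d \<Longrightarrow> f dvd 1 \<longleftrightarrow> d = 0"
  using sing_unit unit_sing sing_uniq by blast

lemma irr_intro: assumes "sing f d" "1 \<le> d" "d = 1 \<or> coeff f 0 \<noteq> 0"
  shows "irreducible f"
proof -
  have "f \<noteq> 0" using assms(1) by (auto simp: sing_def)
  moreover have "\<not> f dvd 1" using unit_iff[OF assms(1)] assms(2) by simp
  moreover have "a dvd 1 \<or> b dvd 1" if "f = a * b" for a b
  proof (rule ccontr)
    assume "\<not> (a dvd 1 \<or> b dvd 1)"
    from S2[of a b d] assms(1) that obtain x y where xy: "sing a x" "sing b y" "x + y = d" by auto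
    with \<open>\<not> (a dvd 1 \<or> b dvd 1)\<close> unit_iff have "x \<noteq> 0" "y \<noteq> 0" by auto
    then have "d \<noteq> 1" "coeff a 0 \<in> M" "coeff b 0 \<in> M" using xy by (auto simp: sing_def)
    then have "coeff f 0 = 0" using that by (simp add: coeff_mult_0 sq)
    with assms(3) \<open>d \<noteq> 1\<close> show False by simp
  qed
  ultimately show ?thesis by (auto simp: irreducible_def)
qed

lemma X_pow: "[:0,1:] ^ n = monom 1 n" by (simp add: monom_altdef)

lemma sing_Xpow: "sing ([:0,1:] ^ n) n"
  by (simp add: X_pow sing_def coeff_monom one_nin)

lemma sing_X: "sing [:0,1:] 1" using sing_Xpow[of 1] by simp

lemma sing_prod: "list_all2 sing fs ds \<Longrightarrow> sing (prod_list fs) (sum_list ds)"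
proof (induct fs arbitrary: ds)
  case Nil then show ?case by (simp add: sing_one)
next
  case (Cons f fs) then show ?case by (cases ds) (auto intro: S1)
qed

lemma sing_prod_dec: "sing (prod_list fs) d \<Longrightarrow> \<exists>ds. list_all2 sing fs ds \<and> sum_list ds = d"
proof (induct fs arbitrary: d)
  case Nil then show ?case using sing_uniq sing_one by auto
next
  case (Cons f fs)
  then obtain a b where "sing f a" "sing (prod_list fs) b" "a + b = d" using S2 by fastforce
  with Cons(1) obtain ds where "list_all2 sing fs ds" "sum_list ds = b" by blast
  with \<open>sing f a\<close> \<open>a+b=d\<close> show ?case by (intro exI[of _ "a#ds"]) auto
qed

lemma irr_sing: assumes "irreducible f" "sing f d"
  shows "1 \<le> d" "2 \<le> d \<Longrightarrow> coeff f 0 \<noteq> 0"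
proof -
  show "1 \<le> d" using assms unit_iff by (auto simp: irreducible_def)
next
  assume "2 \<le> d"
  show "coeff f 0 \<noteq> 0"
  proof
    assume h: "coeff f 0 = 0"
    obtain a q where fq: "f = pCons a q" by (cases f)
    with h have "a = 0" by simp
    then have "f = [:0,1:] * q" using fq by simp
    moreover have "sing q (d-1)" using assms(2) \<open>2 \<le> d\<close> unfolding sing_def fq
      by (auto simp: coeff_pCons split: nat.splits)
    moreover have "\<not> ([:0,1:] :: 'a poly) dvd 1" using unit_iff[OF sing_X] by simp
    moreover have "\<not> q dvd 1" using unit_iff[OF \<open>sing q (d-1)\<close>] \<open>2 \<le> d\<close> by auto
    ultimately show False using assms(1) unfolding irreducible_def by metis
  qed
qed

lemma W:
  assumes "list_all2 (\<lambda>f d. sing f d \<and> d \<le> D \<and> (d = D \<longrightarrow> coeff f 0 \<noteq> 0)) fs ds" "1 \<le> D"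
  shows "\<exists>ws. length ws = length (filter ((=) D) ds) \<and> (\<forall>w\<in>set ws. w \<in> M \<and> w \<noteq> 0)
     \<and> coeff (monom 1 D * prod_list fs) (sum_list ds) = sum_list ws"
  using assms(1)
proof (induct fs arbitrary: ds)
  case Nil then show ?case using assms(2) by (auto simp: coeff_monom_mult)
next
  case (Cons f fs)
  then obtain d ds' where ds: "ds = d # ds'" and fd: "sing f d" "d \<le> D" "d = D \<longrightarrow> coeff f 0 \<noteq> 0"
    and rest: "list_all2 (\<lambda>f d. sing f d \<and> d \<le> D \<and> (d = D \<longrightarrow> coeff f 0 \<noteq> 0)) fs ds'"
    by (cases ds) auto
  from Cons(1)[OF rest] obtain ws' where ws': "length ws' = length (filter ((=) D) ds')"
    "\<forall>w\<in>set ws'. w \<in> M \<and> w \<noteq> 0" "coeff (monom 1 D * prod_list fs) (sum_list ds') = sum_list ws'"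
    by blast
  define P where "P = prod_list fs"
  define N where "N = sum_list ds'"
  have sP: "sing P N" unfolding P_def N_def
    by (rule sing_prod) (use rest in \<open>auto elim: list_all2_mono\<close>)
  define Q where "Q = monom 1 D * P"
  have cQ: "coeff Q j = (if j < D then 0 else coeff P (j - D))" for j
    by (simp add: Q_def coeff_monom_mult)
  define g where "g i = coeff f i * coeff Q (d + N - i)" for i
  define S where "S = {d} \<union> (if d = D then {0} else {})"
  have "coeff (monom 1 D * prod_list (f # fs)) (sum_list ds) = coeff (f * Q) (d + N)"
    by (simp add: ds Q_def P_def N_def algebra_simps)
  also have "\<dots> = sum g {..d+N}" by (simp add: coeff_mult g_def)
  also have "\<dots> = sum g S"
  proof (rule sum.mono_neutral_right)
    show "S \<subseteq> {..d+N}" by (auto simp: S_def)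
    show "\<forall>i\<in>{..d + N} - S. g i = 0"
    proof
      fix i assume i: "i \<in> {..d + N} - S"
      then have fi: "coeff f i \<in> M" using fd by (auto simp: sing_def S_def)
      show "g i = 0"
      proof (cases "d + N - i < D")
        case True then show ?thesis by (simp add: g_def cQ)
      next
        case False
        then have "d + N - i - D \<noteq> N" using i fd(2) by (auto simp: S_def split: if_splits)
        then have "coeff P (d + N - i - D) \<in> M" using sP by (auto simp: sing_def)
        then show ?thesis using False fi by (simp add: g_def cQ sq)
      qed
    qed
  qed simp
  finally have eq: "coeff (monom 1 D * prod_list (f # fs)) (sum_list ds) = sum g S" .
  have gd: "g d = coeff f d * sum_list ws'"
    using ws'(3) by (simp add: g_def Q_def P_def N_def)
  let ?u = "coeff f d"
  have u: "?u \<notin> M" using fd by (simp add: sing_def)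
  have mw: "\<forall>w\<in>set (map ((*) ?u) ws'). w \<in> M \<and> w \<noteq> 0"
    using ws'(2) u by (auto intro: mult_inR simp: mult_ne0[OF u])
  show ?case
  proof (cases "d = D")
    case False
    then have "sum g S = g d" by (simp add: S_def)
    then show ?thesis using eq gd mw ws'(1) False
      by (intro exI[of _ "map ((*) ?u) ws'"]) (auto simp: ds sum_list_const_mult)
  next
    case True
    with assms(2) have "d \<noteq> 0" by simp
    then have "sum g S = g 0 + g d" using True by (simp add: S_def)
    moreover have "g 0 = coeff f 0 * coeff P N" using True by (simp add: g_def cQ)
    moreover have "coeff f 0 \<in> M" using fd \<open>d \<noteq> 0\<close> by (auto simp: sing_def)
    moreover have "coeff f 0 * coeff P N \<noteq> 0"
      using mult_ne0[of "coeff P N" "coeff f 0"] sP fd True by (auto simp: sing_def mult.commute)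
    ultimately show ?thesis using eq gd mw ws'(1) True
      by (intro exI[of _ "(coeff f 0 * coeff P N) # map ((*) ?u) ws'"])
         (auto simp: ds sum_list_const_mult intro: mult_inL)
  qed
qed


end

context sqz begin
lemma factor_data:
  fixes fs :: "'a poly list"
  assumes "\<forall>g\<in>set fs. irreducible g" "prod_list fs = [:0,1:]^n"
  shows "\<exists>ds. length ds = length fs \<and> (\<forall>d\<in>set ds. 1 \<le> d) \<and> sum_list ds = n \<and>
    (\<forall>D. 2 \<le> D \<longrightarrow> (\<forall>d\<in>set ds. d \<le> D) \<longrightarrow> (\<exists>ws. length ws = length (filter ((=) D) ds)
        \<and> (\<forall>w\<in>set ws. w \<in> M \<and> w \<noteq> 0) \<and> sum_list ws = 0))"
proof -
  from sing_prod_dec[of fs n] assms(2) sing_Xpow obtain ds where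
    ds: "list_all2 sing fs ds" "sum_list ds = n" by auto
  have len: "length ds = length fs" using ds(1) by (simp add: list_all2_lengthD)
  have nth: "sing (fs!i) (ds!i)" "irreducible (fs!i)" if "i < length fs" for i
    using ds(1) that assms(1) by (auto simp: list_all2_nthD)
  have one: "\<forall>d\<in>set ds. 1 \<le> d"
    using nth irr_sing(1) len by (metis in_set_conv_nth)
  have "\<exists>ws. length ws = length (filter ((=) D) ds)
        \<and> (\<forall>w\<in>set ws. w \<in> M \<and> w \<noteq> 0) \<and> sum_list ws = 0"
    if D: "2 \<le> D" "\<forall>d\<in>set ds. d \<le> D" for D
  proof -
    have "list_all2 (\<lambda>f d. sing f d \<and> d \<le> D \<and> (d = D \<longrightarrow> coeff f 0 \<noteq> 0)) fs ds"
    proof (rule list_all2_all_nthI[OF len[symmetric]])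
      fix i assume "i < length fs"
      then show "sing (fs!i) (ds!i) \<and> ds!i \<le> D \<and> (ds!i = D \<longrightarrow> coeff (fs!i) 0 \<noteq> 0)"
        using nth[of i] irr_sing(2) D len by (metis nth_mem)
    qed
    from W[OF this] D obtain ws where ws: "length ws = length (filter ((=) D) ds)"
      "\<forall>w\<in>set ws. w \<in> M \<and> w \<noteq> 0" "coeff (monom 1 D * prod_list fs) (sum_list ds) = sum_list ws"
      by auto
    have "coeff (monom 1 D * prod_list fs) (sum_list ds) = 0"
      using D by (simp add: assms(2) ds(2) coeff_monom_mult X_pow coeff_monom) arith
    with ws show ?thesis by auto
  qed
  with len one ds(2) show ?thesis by blast
qed

lemma lengthsI: "length fs = k \<Longrightarrow> 0 < k \<Longrightarrow> \<forall>g\<in>set fs. irreducible g \<Longrightarrow> prod_list fs = f \<Longrightarrow> k \<in> lengths f"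
  by (auto simp: lengths_def)

lemma irr_shape:
  assumes "2 \<le> D" "0 < e" "e < D" "a \<in> M" "a \<noteq> 0" "b \<in> M"
  shows "irreducible ([:0,1:]^D + [:a:] + [:b:] * [:0,1:]^e)"
proof (rule irr_intro)
  show "sing ([:0,1:]^D + [:a:] + [:b:] * [:0,1:]^e) D"
    using assms by (auto simp: sing_def X_pow coeff_monom coeff_pCons one_nin split: nat.splits)
qed (use assms in \<open>auto simp: X_pow coeff_monom\<close>)

lemma irr_X: "irreducible ([:0,1:] :: 'a poly)" by (rule irr_intro[OF sing_X]) auto

lemma prod_rep: "prod_list (replicate m ([:0,1:]::'a poly)) = [:0,1:]^m"
  by (simp add: prod_list_replicate)

lemma famP: assumes "a \<in> M" "a \<noteq> 0" "2 \<le> D" "2*D \<le> n"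
  shows "n - 2*D + 2 \<in> lengths ([:0,1:]^n :: 'a poly)"
proof -
  let ?X = "[:0,1:] :: 'a poly"
  let ?A = "[:a:] :: 'a poly"
  define fs where "fs = [?X^D + [:a:] + [:0:] * ?X^1, ?X^D + [:-a:] + [:0:] * ?X^1] @ replicate (n - 2*D) ?X"
  have AA: "?A * ?A = 0" using sq[OF assms(1) assms(1)] by simp
  have e2: "?X^D + [:-a:] + [:0:] * ?X^1 = ?X^D - ?A" by simp
  have "prod_list fs = (?X^D + [:a:] + [:0:] * ?X^1) * (?X^D + [:-a:] + [:0:] * ?X^1) * ?X^(n-2*D)"
    unfolding fs_def by (simp only: prod_list.append prod_rep) simp
  also have "\<dots> = (?X^D + ?A) * (?X^D - ?A) * ?X^(n-2*D)" unfolding e2 by simp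
  also have "\<dots> = (?X^D * ?X^D - ?A * ?A) * ?X^(n-2*D)" by (simp add: algebra_simps)
  also have "\<dots> = ?X^(D + D + (n - 2*D))" using AA by (simp add: power_add)
  also have "D + D + (n - 2*D) = n" using assms by simp
  finally have p: "prod_list fs = ?X^n" .
  have irr: "\<forall>g\<in>set fs. irreducible g"
    using irr_shape[of D 1 a 0] irr_shape[of D 1 "-a" 0] irr_X assms neg_in[of a]
    by (auto simp: fs_def)
  show ?thesis by (rule lengthsI[OF _ _ irr p]) (auto simp: fs_def)
qed

lemma idT: fixes Y X2 A :: "'b::comm_ring_1"
  shows "(Y * X2 + A - A * Y) * (Y * X2 - A) * (X2 + A) = Y*Y*X2*X2*X2 + (A*A) * (Y - 1 - Y*Y) * X2 + (A*A)*(Y - 1)*A"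
  by (simp add: algebra_simps)

lemma id3: fixes X2 A B :: "'b::comm_ring_1"
  shows "(X2 + A) * (X2 + B) * (X2 - A - B) = X2*X2*X2 - (A*A + A*B + B*B) * X2 - (A*A) * B - A*(B*B)"
  by (simp add: algebra_simps)

lemma famT: assumes "a \<in> M" "a \<noteq> 0" "3 \<le> D" "2*D + 2 \<le> n"
  shows "n - 2*D + 1 \<in> lengths ([:0,1:]^n :: 'a poly)"
proof -
  let ?X = "[:0,1:] :: 'a poly"
  let ?A = "[:a:] :: 'a poly"
  let ?Y = "?X^(D-2)"
  define fs where "fs = [?X^D + [:a:] + [:-a:] * ?X^(D-2), ?X^D + [:-a:] + [:0:] * ?X^1,
     ?X^2 + [:a:] + [:0:] * ?X^1] @ replicate (n - 2*D - 2) ?X"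
  have AA: "?A * ?A = 0" using sq[OF assms(1) assms(1)] by simp
  have DD: "D = (D-2)+2" using assms by simp
  have XD: "?X^D = ?Y * ?X^2" by (subst DD) (simp only: power_add diff_add)
  have e1: "?X^D + [:a:] + [:-a:] * ?X^(D-2) = ?Y * ?X^2 + ?A - ?A * ?Y" unfolding XD by simp
  have e2: "?X^D + [:-a:] + [:0:] * ?X^1 = ?Y * ?X^2 - ?A" unfolding XD by simp
  have e3: "?X^2 + [:a:] + [:0:] * ?X^1 = ?X^2 + ?A" by simp
  have "prod_list fs = (?X^D + [:a:] + [:-a:] * ?X^(D-2)) * (?X^D + [:-a:] + [:0:] * ?X^1)
      * (?X^2 + [:a:] + [:0:] * ?X^1) * ?X^(n-2*D-2)"
    unfolding fs_def by (simp only: prod_list.append prod_rep) (simp add: mult.assoc)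
  also have "\<dots> = (?Y * ?X^2 + ?A - ?A * ?Y) * (?Y * ?X^2 - ?A) * (?X^2 + ?A) * ?X^(n-2*D-2)"
    unfolding e1 e2 e3 ..
  also have "\<dots> = (?Y*?Y*?X^2*?X^2*?X^2 + (?A*?A) * (?Y - 1 - ?Y*?Y) * ?X^2 + (?A*?A)*(?Y - 1)*?A) * ?X^(n-2*D-2)"
    by (simp only: idT)
  also have "\<dots> = ?Y*?Y*?X^2*?X^2*?X^2 * ?X^(n-2*D-2)"
    by (simp only: AA mult_zero_left add_0_right)
  also have "\<dots> = ?X^((D-2) + (D-2) + 2 + 2 + 2 + (n - 2*D - 2))" by (simp only: power_add)
  also have "(D-2) + (D-2) + 2 + 2 + 2 + (n - 2*D - 2) = n" using assms by simp
  finally have p: "prod_list fs = ?X^n" .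
  have irr: "\<forall>g\<in>set fs. irreducible g"
    using irr_shape[of D "D-2" a "-a"] irr_shape[of D 1 "-a" 0] irr_shape[of 2 1 a 0] irr_X assms neg_in[of a]
    by (auto simp: fs_def)
  show ?thesis by (rule lengthsI[OF _ _ irr p]) (use assms in \<open>auto simp: fs_def\<close>)
qed

lemma fam3: assumes "a \<in> M" "a \<noteq> 0" "b \<in> M" "b \<noteq> 0" "a + b \<noteq> 0" "6 \<le> n"
  shows "n - 3 \<in> lengths ([:0,1:]^n :: 'a poly)"
proof -
  let ?X = "[:0,1:] :: 'a poly"
  let ?A = "[:a:] :: 'a poly"
  let ?B = "[:b:] :: 'a poly"
  define c where "c = - (a + b)"
  have cM: "c \<in> M" "c \<noteq> 0" unfolding c_def using neg_in[OF add_in[OF assms(1,3)]] assms(5) by auto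
  define fs where "fs = [?X^2 + [:a:] + [:0:] * ?X^1, ?X^2 + [:b:] + [:0:] * ?X^1,
     ?X^2 + [:c:] + [:0:] * ?X^1] @ replicate (n - 6) ?X"
  have z: "?A * ?A = 0" "?A * ?B = 0" "?B * ?B = 0" using sq assms by auto
  have e3: "?X^2 + [:c:] + [:0:] * ?X^1 = ?X^2 - ?A - ?B" by (simp add: c_def)
  have "prod_list fs = (?X^2 + [:a:] + [:0:] * ?X^1) * (?X^2 + [:b:] + [:0:] * ?X^1)
      * (?X^2 + [:c:] + [:0:] * ?X^1) * ?X^(n-6)"
    unfolding fs_def by (simp only: prod_list.append prod_rep) (simp add: mult.assoc)
  also have "\<dots> = (?X^2 + ?A) * (?X^2 + ?B) * (?X^2 - ?A - ?B) * ?X^(n-6)"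
    unfolding e3 by simp
  also have "\<dots> = (?X^2*?X^2*?X^2 - (?A*?A + ?A*?B + ?B*?B) * ?X^2 - (?A*?A) * ?B - ?A*(?B*?B)) * ?X^(n-6)"
    by (simp only: id3)
  also have "\<dots> = ?X^2*?X^2*?X^2 * ?X^(n-6)"
    by (simp only: z mult_zero_left mult_zero_right add_0_right diff_0_right)
  also have "\<dots> = ?X^(2+2+2+(n-6))" by (simp only: power_add)
  also have "2+2+2+(n-6) = n" using assms by simp
  finally have p: "prod_list fs = ?X^n" .
  have irr: "\<forall>g\<in>set fs. irreducible g"
    using irr_shape[of 2 1 a 0] irr_shape[of 2 1 b 0] irr_shape[of 2 1 c 0] irr_X assms cM
    by (auto simp: fs_def)
  show ?thesis by (rule lengthsI[OF _ _ irr p]) (use assms in \<open>auto simp: fs_def\<close>)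
qed

lemma famN: assumes "1 \<le> n" shows "n \<in> lengths ([:0,1:]^n :: 'a poly)"
  by (rule lengthsI[of "replicate n [:0,1:]"]) (use assms irr_X in \<open>auto simp: prod_rep\<close>)

end


lemma h1: "\<forall>d\<in>set ds. 1 \<le> (d::nat) \<Longrightarrow> sum_list ds = length ds + sum_list (map (\<lambda>d. d - 1) ds)"
  by (induct ds) auto
lemma h2: "length (filter ((=) D) ds) * (D - 1) \<le> sum_list (map (\<lambda>d::nat. d - 1) ds)"
  by (induct ds) auto
lemma h3: "\<forall>d\<in>set ds. 1 \<le> d \<and> d \<le> (2::nat) \<Longrightarrow> sum_list (map (\<lambda>d. d - 1) ds) = length (filter ((=) 2) ds)"
  by (induct ds) auto
lemma hconst: "\<forall>d\<in>set ds. d = (D::nat) \<Longrightarrow> sum_list ds = length ds * D"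
  by (induct ds) auto

lemma comb:
  fixes ds :: "nat list"
  assumes one: "\<forall>d\<in>set ds. 1 \<le> d" and sum: "sum_list ds = n" and ne: "ds \<noteq> []"
    and cnt: "2 \<le> Max (set ds) \<Longrightarrow> 2 \<le> length (filter ((=) (Max (set ds))) ds)"
  shows "length ds = n \<or> (2 \<le> length ds \<and> length ds + 2 \<le> n \<and> (odd n \<longrightarrow> 3 \<le> length ds))"
    and "2 \<le> Max (set ds) \<Longrightarrow> even (length (filter ((=) (Max (set ds))) ds)) \<Longrightarrow> length ds + 3 \<noteq> n"
proof -
  define D where "D = Max (set ds)"
  have le: "\<forall>d\<in>set ds. d \<le> D" unfolding D_def by simp
  have DI: "D \<in> set ds" unfolding D_def using ne by simp
  have e: "n = length ds + sum_list (map (\<lambda>d. d - 1) ds)" using h1[OF one] sum by simp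
  have c2: "length (filter ((=) D) ds) * (D - 1) \<le> sum_list (map (\<lambda>d. d - 1) ds)" by (rule h2)
  have cl: "length (filter ((=) D) ds) \<le> length ds" by (rule length_filter_le)
  show "length ds = n \<or> (2 \<le> length ds \<and> length ds + 2 \<le> n \<and> (odd n \<longrightarrow> 3 \<le> length ds))"
  proof (cases "2 \<le> D")
    case False
    then have "\<forall>d\<in>set ds. d = 1" using le one by force
    then have "sum_list (map (\<lambda>d. d - 1) ds) = 0" by (induct ds) auto
    with e show ?thesis by simp
  next
    case True
    then have c: "2 \<le> length (filter ((=) D) ds)" using cnt D_def by simp
    have "2 * 1 \<le> length (filter ((=) D) ds) * (D - 1)" by (rule mult_le_mono[OF c]) (use True in simp)
    with c2 have A: "2 \<le> sum_list (map (\<lambda>d. d - 1) ds)" by simp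
    have B: "odd n \<longrightarrow> length ds \<noteq> 2"
    proof
      assume "odd n"
      show "length ds \<noteq> 2"
      proof
        assume l2: "length ds = 2"
        have "\<forall>d\<in>set ds. D = d"
        proof (rule ccontr)
          assume "\<not> (\<forall>d\<in>set ds. D = d)"
          then obtain d where "d \<in> set ds" "\<not> D = d" by blast
          from length_filter_less[of d ds "(=) D"] \<open>d \<in> set ds\<close> \<open>\<not> D = d\<close> c l2 show False by simp
        qed
        then have "sum_list ds = length ds * D" using hconst by metis
        with sum l2 \<open>odd n\<close> show False by (metis dvd_triv_left mult.commute)
      qed
    qed
    have C: "2 \<le> length ds" using c cl by linarith
    have "length ds + 2 \<le> n" using e A by linarith
    moreover have "odd n \<longrightarrow> 3 \<le> length ds" using B C by auto
    ultimately show ?thesis using C by blast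
  qed
  assume D2: "2 \<le> Max (set ds)" and ev: "even (length (filter ((=) (Max (set ds))) ds))"
  show "length ds + 3 \<noteq> n"
  proof
    assume n3: "length ds + 3 = n"
    have c: "2 \<le> length (filter ((=) D) ds)" using cnt D_def D2 by simp
    show False
    proof (cases "D = 2")
      case True
      then have "sum_list (map (\<lambda>d. d - 1) ds) = length (filter ((=) 2) ds)"
        using h3 le one by metis
      with e n3 ev True D_def show False by simp
    next
      case False
      with D2 D_def have "3 \<le> D" by simp
      have "2 * 2 \<le> length (filter ((=) D) ds) * (D - 1)" by (rule mult_le_mono[OF c]) (use \<open>3 \<le> D\<close> in simp)
      with c2 have "4 \<le> sum_list (map (\<lambda>d. d - 1) ds)" by simp
      with e n3 show False by simp
    qed
  qed
qed


lemma parity_sum: fixes a :: "'b::comm_ring_1"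
  assumes "\<forall>w\<in>set ws. w = a" "a + a = 0"
  shows "sum_list ws = (if even (length ws) then 0 else a)"
  using assms by (induct ws) auto

context sqz begin

lemma lower:
  assumes "k \<in> lengths ([:0,1:]^n :: 'a poly)" "1 \<le> n"
  shows "k = n \<or> (2 \<le> k \<and> k + 2 \<le> n \<and> (odd n \<longrightarrow> 3 \<le> k))"
    and "(\<exists>a. a + a = 0 \<and> M = {0,a}) \<Longrightarrow> k + 3 \<noteq> n"
proof -
  from assms(1) obtain fs where fs: "length fs = k" "\<forall>g\<in>set fs. irreducible g" "prod_list fs = ([:0,1:]^n :: 'a poly)"
    using assms(1) unfolding lengths_def by blast
  from factor_data[OF fs(2,3)] obtain ds where ds: "length ds = length fs" "\<forall>d\<in>set ds. 1 \<le> d"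
    "sum_list ds = n" and W: "\<And>D. 2 \<le> D \<Longrightarrow> \<forall>d\<in>set ds. d \<le> D \<Longrightarrow> \<exists>ws. length ws = length (filter ((=) D) ds)
        \<and> (\<forall>w\<in>set ws. w \<in> M \<and> w \<noteq> 0) \<and> sum_list ws = 0" by blast
  have ne: "ds \<noteq> []" using ds(3) assms(2) by auto
  define D where "D = Max (set ds)"
  have le: "\<forall>d\<in>set ds. d \<le> D" unfolding D_def by simp
  have DI: "D \<in> set ds" unfolding D_def using ne by simp
  have "D \<in> set (filter ((=) D) ds)" using DI by simp
  then have pos: "0 < length (filter ((=) D) ds)" by (rule length_pos_if_in_set)
  have cnt: "2 \<le> length (filter ((=) D) ds) \<and>
     ((\<exists>a. a + a = 0 \<and> M = {0,a}) \<longrightarrow> even (length (filter ((=) D) ds)))" if "2 \<le> D"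
  proof -
    from W[OF that le] obtain ws where ws: "length ws = length (filter ((=) D) ds)"
        "\<forall>w\<in>set ws. w \<in> M \<and> w \<noteq> 0" "sum_list ws = 0" by blast
    have "length ws \<noteq> 1"
    proof
      assume "length ws = 1"
      then obtain w where "ws = [w]" by (cases ws) auto
      with ws show False by simp
    qed
    with pos ws(1) have "2 \<le> length ws" by linarith
    moreover have "even (length ws)" if "\<exists>a. a + a = 0 \<and> M = {0,a}"
    proof -
      from that obtain a where a: "a + a = 0" "M = {0,a}" by blast
      then have "\<forall>w\<in>set ws. w = a" using ws(2) by auto
      have wa: "\<forall>w\<in>set ws. w = a" by fact
      have "ws \<noteq> []" using pos ws(1) by auto
      then have "hd ws \<in> set ws" by simp
      then have "a \<noteq> 0" using wa ws(2) by metis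
      from parity_sum[OF wa a(1)] ws(3) \<open>a \<noteq> 0\<close> show ?thesis by (auto split: if_splits)
    qed
    ultimately show ?thesis using ws(1) by auto
  qed
  have c: "2 \<le> Max (set ds) \<Longrightarrow> 2 \<le> length (filter ((=) (Max (set ds))) ds)"
    using cnt unfolding D_def by blast
  have kl: "length ds = k" using ds(1) fs(1) by simp
  show "k = n \<or> (2 \<le> k \<and> k + 2 \<le> n \<and> (odd n \<longrightarrow> 3 \<le> k))"
    using comb(1)[OF ds(2,3) ne c] unfolding kl .
  assume H: "\<exists>a. a + a = 0 \<and> M = {0,a}"
  have "2 \<le> Max (set ds) \<Longrightarrow> even (length (filter ((=) (Max (set ds))) ds))"
    using cnt H unfolding D_def by blast
  note ev = this
  show "k + 3 \<noteq> n"
  proof (cases "2 \<le> Max (set ds)")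
    case True then show ?thesis using comb(2)[OF ds(2,3) ne c] ev unfolding kl by blast
  next
    case False
    have "\<forall>d\<in>set ds. d - 1 = 0" using False ne by (auto simp: not_le)
    then have "sum_list (map (\<lambda>d. d - 1) ds) = 0" by (simp add: sum_list_eq_0_iff)
    then have "n = k" using h1[OF ds(2)] ds(3) kl by simp
    then show ?thesis by simp
  qed
qed

lemma upper:
  assumes "a \<in> M" "a \<noteq> 0" "7 \<le> n" "k = n \<or> (2 \<le> k \<and> k + 2 \<le> n \<and> (odd n \<longrightarrow> 3 \<le> k))"
    "k + 3 \<noteq> n \<or> (\<exists>b\<in>M. b \<noteq> 0 \<and> a + b \<noteq> 0)"
  shows "k \<in> lengths ([:0,1:]^n :: 'a poly)"
proof (cases "k = n")
  case True then show ?thesis using famN assms(3) by simp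
next
  case False
  with assms(4) have k: "2 \<le> k" "k + 2 \<le> n" "odd n \<longrightarrow> 3 \<le> k" by auto
  define j where "j = n - k"
  have nj: "n = k + j" "2 \<le> j" using k by (auto simp: j_def)
  show ?thesis
  proof (cases "even j")
    case True
    then obtain i where i: "j = 2 * i" by (rule evenE)
    have "n - 2 * (i + 1) + 2 \<in> lengths ([:0,1:]^n :: 'a poly)"
      by (rule famP) (use assms k nj i in auto)
    moreover have "n - 2 * (i + 1) + 2 = k" using nj i k by auto
    ultimately show ?thesis by simp
  next
    case odd: False
    then obtain i where i: "j = 2 * i + 1" by (rule oddE)
    show ?thesis
    proof (cases "j = 3")
      case True
      then have "k + 3 = n" using nj by simp
      with assms(5) obtain b where "b \<in> M" "b \<noteq> 0" "a + b \<noteq> 0" by auto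
      from fam3[OF assms(1,2) this] assms(3) have "n - 3 \<in> lengths ([:0,1:]^n :: 'a poly)" by simp
      moreover have "n - 3 = k" using True nj by simp
      ultimately show ?thesis by simp
    next
      case False
      with i nj have i2: "2 \<le> i" by auto
      have k3: "3 \<le> k"
      proof (rule ccontr)
        assume "\<not> 3 \<le> k"
        with k have "k = 2" by simp
        with nj i have "odd n" by simp
        with k \<open>\<not> 3 \<le> k\<close> show False by simp
      qed
      have "n - 2 * (i + 1) + 1 \<in> lengths ([:0,1:]^n :: 'a poly)"
        by (rule famT) (use assms nj i i2 k3 in auto)
      moreover have "n - 2 * (i + 1) + 1 = k" using nj i k by auto
      ultimately show ?thesis by simp
    qed
  qed
qed

lemma two_elem_univ:
  assumes "a \<in> M" "a \<noteq> 0" "M = {0,a}"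
  shows "UNIV = M \<union> ((+) 1) ` M"
proof -
  have "r \<in> M \<union> ((+) 1) ` M" for r
  proof (cases "r \<in> M")
    case False
    have "r * a \<in> M" by (rule mult_inR[OF assms(1)])
    moreover have "r * a \<noteq> 0" using mult_ne0[OF False assms(2)] .
    ultimately have "r * a = a" using assms(3) by auto
    then have "(r - 1) * a = 0" by (simp add: algebra_simps)
    then have "r - 1 \<in> M" using mult_ne0[of "r-1" a] assms(2) by auto
    moreover have "r = 1 + (r - 1)" by simp
    ultimately show ?thesis by blast
  qed simp
  then show ?thesis by blast
qed

lemma caseA:
  assumes "M \<noteq> {0}" "\<not> finite (UNIV :: 'a set) \<or> card (UNIV :: 'a set) > 4"
  shows "\<exists>a b. a \<in> M \<and> a \<noteq> 0 \<and> b \<in> M \<and> b \<noteq> 0 \<and> a + b \<noteq> 0"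
proof (rule ccontr)
  assume H: "\<not> ?thesis"
  from assms(1) zero_in obtain a where a: "a \<in> M" "a \<noteq> 0" by blast
  have aa: "a + a = 0" using H a by blast
  have "M = {0,a}"
  proof
    show "M \<subseteq> {0,a}"
    proof
      fix b assume "b \<in> M"
      show "b \<in> {0,a}"
      proof (cases "b = 0")
        case False
        with H a \<open>b \<in> M\<close> have "a + b = 0" by blast
        with aa have "b = a" by (metis add_left_cancel)
        then show ?thesis by simp
      qed simp
    qed
  qed (use a in simp)
  with two_elem_univ[OF a] have U: "UNIV = M \<union> ((+) 1) ` M" by simp
  have "finite (UNIV :: 'a set)" using U \<open>M = {0,a}\<close> by (metis finite.emptyI finite.insertI finite_Un finite_imageI)
  moreover have "card (UNIV :: 'a set) \<le> 4"
  proof -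
    have "card (UNIV :: 'a set) \<le> card M + card (((+) 1) ` M)" using U by (metis card_Un_le)
    also have "\<dots> \<le> card M + card M" using card_image_le[of M "(+) 1"] \<open>M = {0,a}\<close> by simp
    also have "card M \<le> 2" using \<open>M = {0,a}\<close> by (simp add: card_insert_le_m1)
    finally show ?thesis by simp
  qed
  ultimately show False using assms(2) by simp
qed

lemma caseB:
  assumes "M \<noteq> {0}" "finite (UNIV :: 'a set)" "card (UNIV :: 'a set) = 4"
  shows "\<exists>a. a + a = 0 \<and> M = {0,a}"
proof -
  from assms(1) zero_in obtain a where a: "a \<in> M" "a \<noteq> 0" by blast
  have fin: "finite M" using assms(2) by (rule finite_subset[rotated]) simp
  have disj: "M \<inter> ((+) 1) ` M = {}"
  proof (rule ccontr)
    assume "M \<inter> ((+) 1) ` M \<noteq> {}"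
    then obtain m where "m \<in> M" "1 + m \<in> M" by auto
    then have "(1 + m) - m \<in> M" by (rule diff_in[rotated]) 
    then show False using one_nin by simp
  qed
  have inj: "inj_on ((+) 1) M" by (rule inj_onI) simp
  have "card (M \<union> ((+) 1) ` M) = card M + card M"
    using card_Un_disjoint[OF fin finite_imageI[OF fin] disj] card_image[OF inj] by simp
  moreover have "card (M \<union> ((+) 1) ` M) \<le> 4" using assms(2,3) by (metis card_mono subset_UNIV)
  ultimately have "card M \<le> 2" by simp
  moreover have "{0,a} \<subseteq> M" using a by simp
  moreover have "card {0,a} = 2" using a by simp
  ultimately have M: "M = {0,a}" using fin by (metis card_seteq)
  have "a + a \<in> M" using add_in[OF a(1) a(1)] .
  moreover have "a + a \<noteq> a" using a(2) by simp
  ultimately have "a + a = 0" using M by auto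
  with M show ?thesis by blast
qed

end


theorem theorem4p14:
  fixes M :: "'a::comm_ring_1 set" and n :: nat
  assumes "artinian_ring TYPE('a)"
    and "local_ring_with_max M"
    and "M \<noteq> {0}"
    and "\<forall>a\<in>M. \<forall>b\<in>M. a * b = 0"
    and "n \<ge> 7"
  shows "(\<not> finite (UNIV :: 'a set) \<or> card (UNIV :: 'a set) > 4 \<longrightarrow>
            lengths ([:0, 1:] ^ n :: 'a poly) =
              (if odd n then {3..n-2} \<union> {n} else {2..n-2} \<union> {n}))
       \<and> (finite (UNIV :: 'a set) \<and> card (UNIV :: 'a set) = 4 \<longrightarrow>
            lengths ([:0, 1:] ^ n :: 'a poly) =
              (if odd n then {3..n-4} \<union> {n-2, n} else {2..n-4} \<union> {n-2, n}))"
proof -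
  have mx: "maximal_ideal M" using assms(2) by (simp add: local_ring_with_max_def)
  then have idl: "is_ideal M" and nU: "M \<noteq> UNIV"
    and mxJ: "\<And>J. is_ideal J \<Longrightarrow> M \<subseteq> J \<Longrightarrow> J = M \<or> J = UNIV"
    by (auto simp: maximal_ideal_def)
  have one: "1 \<notin> M"
  proof
    assume "1 \<in> M"
    then have "r * 1 \<in> M" for r using idl unfolding is_ideal_def by blast
    then show False using nU by auto
  qed
  have unitI: "x dvd 1" if x: "x \<notin> M" for x
  proof -
    define J where "J = {m + r * x | m r. m \<in> M}"
    have "is_ideal J" unfolding is_ideal_def J_def
    proof (intro conjI ballI allI)
      have "0 \<in> M" using idl by (simp add: is_ideal_def)
      moreover have "(0::'a) = 0 + 0 * x" by simp
      ultimately show "0 \<in> {m + r * x | m r. m \<in> M}" by blast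
    next
      fix a b assume "a \<in> {m + r * x | m r. m \<in> M}" "b \<in> {m + r * x | m r. m \<in> M}"
      then obtain m1 r1 m2 r2 where "a = m1 + r1 * x" "b = m2 + r2 * x" "m1 \<in> M" "m2 \<in> M" by blast
      moreover have "m1 + m2 \<in> M" using idl \<open>m1 \<in> M\<close> \<open>m2 \<in> M\<close> by (simp add: is_ideal_def)
      moreover have "a + b = (m1 + m2) + (r1 + r2) * x" using calculation by (simp add: algebra_simps)
      ultimately show "a + b \<in> {m + r * x | m r. m \<in> M}" by blast
    next
      fix s a assume "a \<in> {m + r * x | m r. m \<in> M}"
      then obtain m1 r1 where "a = m1 + r1 * x" "m1 \<in> M" by blast
      moreover have "s * m1 \<in> M" using idl \<open>m1 \<in> M\<close> by (simp add: is_ideal_def)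
      moreover have "s * a = s * m1 + (s * r1) * x" using calculation by (simp add: algebra_simps)
      ultimately show "s * a \<in> {m + r * x | m r. m \<in> M}" by blast
    qed
    moreover have "M \<subseteq> J"
    proof
      fix m assume "m \<in> M"
      moreover have "m = m + 0 * x" by simp
      ultimately show "m \<in> J" unfolding J_def by blast
    qed
    ultimately have "J = M \<or> J = UNIV" by (rule mxJ)
    moreover have "x \<in> J"
    proof -
      have "0 \<in> M" using idl by (simp add: is_ideal_def)
      moreover have "x = 0 + 1 * x" by simp
      ultimately show ?thesis unfolding J_def by blast
    qed
    ultimately have "1 \<in> J" using x by auto
    then obtain m r where mr: "1 = m + r * x" "m \<in> M" unfolding J_def by blast
    have rx: "r * x = 1 - m" using mr(1) by (metis add_diff_cancel_left')
    have "x * (r * (1 + m)) = (r * x) * (1 + m)" by (simp add: ac_simps)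
    also have "\<dots> = (1 - m) * (1 + m)" by (simp only: rx)
    also have "\<dots> = 1 - m * m" by (simp add: algebra_simps)
    also have "m * m = 0" using assms(4) mr(2) by blast
    finally have "x * (r * (1 + m)) = 1" by simp
    then show ?thesis by (metis dvdI)
  qed
  interpret sqz M
    by unfold_locales (use idl one unitI assms(4) in auto)
  have n1: "1 \<le> n" using assms(5) by simp
  show ?thesis
  proof (intro conjI impI)
    assume A: "\<not> finite (UNIV :: 'a set) \<or> card (UNIV :: 'a set) > 4"
    from caseA[OF assms(3) A] obtain a b where ab: "a \<in> M" "a \<noteq> 0" "b \<in> M" "b \<noteq> 0" "a + b \<noteq> 0" by blast
    have "k \<in> lengths ([:0, 1:] ^ n :: 'a poly) \<longleftrightarrow> (k = n \<or> (2 \<le> k \<and> k + 2 \<le> n \<and> (odd n \<longrightarrow> 3 \<le> k)))" for k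
    proof
      assume "k \<in> lengths ([:0, 1:] ^ n :: 'a poly)"
      then show "k = n \<or> (2 \<le> k \<and> k + 2 \<le> n \<and> (odd n \<longrightarrow> 3 \<le> k))" by (rule lower(1)[OF _ n1])
    next
      assume "k = n \<or> (2 \<le> k \<and> k + 2 \<le> n \<and> (odd n \<longrightarrow> 3 \<le> k))"
      then show "k \<in> lengths ([:0, 1:] ^ n :: 'a poly)" using upper[OF ab(1,2) assms(5), of k] ab by blast
    qed
    note iff = this
    show "lengths ([:0, 1:] ^ n :: 'a poly) = (if odd n then {3..n-2} \<union> {n} else {2..n-2} \<union> {n})"
    proof (rule set_eqI)
      fix k show "k \<in> lengths ([:0, 1:] ^ n :: 'a poly) \<longleftrightarrow> k \<in> (if odd n then {3..n-2} \<union> {n} else {2..n-2} \<union> {n})"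
        unfolding iff using assms(5) by (cases "odd n") auto
    qed
  next
    assume B: "finite (UNIV :: 'a set) \<and> card (UNIV :: 'a set) = 4"
    from caseB[OF assms(3)] B obtain a where a: "a + a = 0" "M = {0,a}" by blast
    with assms(3) have a0: "a \<noteq> 0" "a \<in> M" by auto
    have "k \<in> lengths ([:0, 1:] ^ n :: 'a poly) \<longleftrightarrow> (k = n \<or> (2 \<le> k \<and> k + 2 \<le> n \<and> (odd n \<longrightarrow> 3 \<le> k))) \<and> k + 3 \<noteq> n" for k
    proof
      assume h: "k \<in> lengths ([:0, 1:] ^ n :: 'a poly)"
      have "\<exists>a. a + a = 0 \<and> M = {0,a}" using a by blast
      with lower[OF h n1] show "(k = n \<or> (2 \<le> k \<and> k + 2 \<le> n \<and> (odd n \<longrightarrow> 3 \<le> k))) \<and> k + 3 \<noteq> n" by blast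
    next
      assume "(k = n \<or> (2 \<le> k \<and> k + 2 \<le> n \<and> (odd n \<longrightarrow> 3 \<le> k))) \<and> k + 3 \<noteq> n"
      then show "k \<in> lengths ([:0, 1:] ^ n :: 'a poly)" using upper[OF a0(2,1) assms(5), of k] by blast
    qed
    note iff = this
    show "lengths ([:0, 1:] ^ n :: 'a poly) = (if odd n then {3..n-4} \<union> {n-2, n} else {2..n-4} \<union> {n-2, n})"
    proof (rule set_eqI)
      fix k show "k \<in> lengths ([:0, 1:] ^ n :: 'a poly) \<longleftrightarrow> k \<in> (if odd n then {3..n-4} \<union> {n-2, n} else {2..n-4} \<union> {n-2, n})"
        unfolding iff using assms(5) by (cases "odd n") auto
    qed
  qed
qed

end
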